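(* In a strongly causal OPT, let $\rho\in\mathsf{St}_1(\mathrm{A})$ and $\mathcal C\in\mathsf{Tr}_1(\mathrm{A}\to\mathrm{A})$. (i) If every state of the theory has a purification, then $F(\rho,\mathcal C)=\inf_{\Phi\in P_\rho}F[\Phi,(\mathcal C\boxtimes\mathcal I)(\Phi)]^2$. (ii) If moreover the theory satisfies essential uniqueness of purification and atomicity of parallel composition of states, then $F(\rho,\mathcal C)=F[\Phi,(\mathcal C\boxtimes\mathcal I)(\Phi)]^2$ for every $\Phi\in P_\rho$.
   Context: Framework (operational probabilistic theory, OPT): each system $\mathrm{A}$ has states $\mathsf{St}(\mathrm{A})$ (normalized ones $\mathsf{St}_1(\mathrm{A})$), effects $\mathsf{Eff}(\mathrm{A})$, transformations $\mathsf{Tr}(\mathrm{A}\to\mathrm{B})$ (channels $\mathsf{Tr}_1$), sequential ($\circ$) and parallel ($\boxtimes$) composition, pairing $(a|\rho)$. Strong causality: for every test $\{\mathcal A_i\}$ and tests $\{\mathcal B^i_j\}_j$, $\{\mathcal B^i_j\circ\mathcal A_i\}$ is a test; unique deterministic effect $e_{\mathrm{A}}$. A state is pure if its only refinements (collections of states in a preparation test summing to it) are of the form $\lambda_i\rho$. A dilation of $\rho\in\mathsf{St}(\mathrm{A})$ is $\Psi\in\mathsf{St}(\mathrm{A}\mathrm{C})$ with $(\mathcal I_{\mathrm{A}}\boxtimes e_{\mathrm{C}})\Psi=\rho$; $D_\rho$ the set of dilations; a purification is a pure dilation; $P_\rho$ the set of purifications. Essential uniqueness of purification: for every $\rho$ with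 $P_\rho\ne\emptyset$ and all $\Phi,\Psi\in P_\rho\cap\mathsf{St}(\mathrm{A}\mathrm{B})$ there is a reversible $\mathcal U\in\mathsf{Tr}_1(\mathrm{B}\to\mathrm{B})$ with $\Psi=(\mathcal I_{\mathrm{A}}\boxtimes\mathcal U)\Phi$. Atomicity of parallel composition of states: $\phi\boxtimes\psi$ is pure whenever $\phi,\psi$ are pure. Fidelity: for $\rho,\sigma\in\mathsf{St}_1(\mathrm{A})$, $F(\rho,\sigma):=\inf_{\{a_i\}}\sum_i\sqrt{(a_i|\rho)(a_i|\sigma)}$, infimum over observation tests $\{a_i\}$ of $\mathrm{A}$. Correlation fidelity: $F(\rho,\mathcal C):=\inf_{\Psi\in D_\rho}F[\Psi,(\mathcal C\boxtimes\mathcal I)(\Psi)]^2$. *)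

theory Defs
  imports Complex_Main "HOL-Library.Multiset"
begin

text \<open>
Systems are finite lists of elementary systems: composition of systems is list
append and the trivial system I is the empty list (strict monoidal structure).
Events (transformations) live in a single carrier type 'e and are typed by
the set-valued map Ev A B = Tr(A -> B).  Tests are finite lists of events
(outcome-indexed).  cmp g f is the sequential composition g o f, tns f g the
parallel composition f (x) g, idt A the identity, swp A B the swap A B -> B A,
and prob assigns to every event of type I -> I its probability.
\<close>

record ('s, 'e) opt =
  Ev    :: "'s list \<Rightarrow> 's list \<Rightarrow> 'e set"
  Tests :: "'s list \<Rightarrow> 's list \<Rightarrow> 'e list set"
  cmp   :: "'e \<Rightarrow> 'e \<Rightarrow> 'e"
  tns   :: "'e \<Rightarrow> 'e \<Rightarrow> 'e"
  idt   :: "'s list \<Rightarrow> 'e"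
  swp   :: "'s list \<Rightarrow> 's list \<Rightarrow> 'e"
  prob  :: "'e \<Rightarrow> real"

definition St :: "('s,'e) opt \<Rightarrow> 's list \<Rightarrow> 'e set" where
  "St T A = Ev T [] A"

definition St1 :: "('s,'e) opt \<Rightarrow> 's list \<Rightarrow> 'e set" where
  "St1 T A = {\<rho>. [\<rho>] \<in> Tests T [] A}"

definition Eff :: "('s,'e) opt \<Rightarrow> 's list \<Rightarrow> 'e set" where
  "Eff T A = Ev T A []"

definition Tr1 :: "('s,'e) opt \<Rightarrow> 's list \<Rightarrow> 's list \<Rightarrow> 'e set" where
  "Tr1 T A B = {f. [f] \<in> Tests T A B}"

definition pair :: "('s,'e) opt \<Rightarrow> 'e \<Rightarrow> 'e \<Rightarrow> real" where
  "pair T a \<rho> = prob T (cmp T a \<rho>)"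

definition circ :: "('s,'e) opt \<Rightarrow> 's list \<Rightarrow> 'e \<Rightarrow> 'e \<Rightarrow> 'e \<Rightarrow> real" where
  "circ T E \<rho> b f = prob T (cmp T b (cmp T (tns T f (idt T E)) \<rho>))"

locale sc_opt =
  fixes T :: "('s,'e) opt"
  assumes tests_ev: "\<And>A B Ts. Ts \<in> Tests T A B \<Longrightarrow> Ts \<noteq> [] \<and> set Ts \<subseteq> Ev T A B"
    and ev_tests: "\<And>A B f. f \<in> Ev T A B \<Longrightarrow> \<exists>Ts\<in>Tests T A B. f \<in> set Ts"
    and cmp_ev: "\<And>A B C f g. f \<in> Ev T A B \<Longrightarrow> g \<in> Ev T B C \<Longrightarrow> cmp T g f \<in> Ev T A C"
    and tns_ev: "\<And>A B C D f g. f \<in> Ev T A B \<Longrightarrow> g \<in> Ev T C D \<Longrightarrow> tns T f g \<in> Ev T (A @ C) (B @ D)"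
    and idt_test: "\<And>A. [idt T A] \<in> Tests T A A"
    and swp_test: "\<And>A B. [swp T A B] \<in> Tests T (A @ B) (B @ A)"
    and par_tests: "\<And>A B C D T1 T2. T1 \<in> Tests T A B \<Longrightarrow> T2 \<in> Tests T C D \<Longrightarrow>
          concat (map (\<lambda>f. map (\<lambda>g. tns T f g) T2) T1) \<in> Tests T (A @ C) (B @ D)"
    and strong_causality: "\<And>A B C T1 Ts. T1 \<in> Tests T A B \<Longrightarrow> (\<forall>i<length T1. Ts i \<in> Tests T B C) \<Longrightarrow>
          concat (map (\<lambda>i. map (\<lambda>g. cmp T g (T1 ! i)) (Ts i)) [0..<length T1]) \<in> Tests T A C"
    and tests_perm: "\<And>A B T1 T2. T1 \<in> Tests T A B \<Longrightarrow> mset T2 = mset T1 \<Longrightarrow> T2 \<in> Tests T A B"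
    and coarse_graining: "\<And>A B f g xs. f # g # xs \<in> Tests T A B \<Longrightarrow>
          \<exists>h. h # xs \<in> Tests T A B \<and>
            (\<forall>E \<rho> b. \<rho> \<in> St T (A @ E) \<longrightarrow> b \<in> Eff T (B @ E) \<longrightarrow>
               circ T E \<rho> b h = circ T E \<rho> b f + circ T E \<rho> b g)"
    and extensionality: "\<And>A B f g. f \<in> Ev T A B \<Longrightarrow> g \<in> Ev T A B \<Longrightarrow>
          (\<forall>E \<rho> b. \<rho> \<in> St T (A @ E) \<longrightarrow> b \<in> Eff T (B @ E) \<longrightarrow> circ T E \<rho> b f = circ T E \<rho> b g)
          \<Longrightarrow> f = g"
    and cmp_assoc: "\<And>A B C D f g h. f \<in> Ev T A B \<Longrightarrow> g \<in> Ev T B C \<Longrightarrow> h \<in> Ev T C D \<Longrightarrow>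
          cmp T h (cmp T g f) = cmp T (cmp T h g) f"
    and cmp_idt: "\<And>A B f. f \<in> Ev T A B \<Longrightarrow> cmp T f (idt T A) = f \<and> cmp T (idt T B) f = f"
    and tns_assoc: "\<And>A B C D E F f g h. f \<in> Ev T A B \<Longrightarrow> g \<in> Ev T C D \<Longrightarrow> h \<in> Ev T E F \<Longrightarrow>
          tns T (tns T f g) h = tns T f (tns T g h)"
    and tns_unit: "\<And>A B f. f \<in> Ev T A B \<Longrightarrow> tns T f (idt T []) = f \<and> tns T (idt T []) f = f"
    and tns_idt: "\<And>A B. tns T (idt T A) (idt T B) = idt T (A @ B)"
    and interchange: "\<And>A B C D E F f f' g g'. f \<in> Ev T A B \<Longrightarrow> f' \<in> Ev T B C \<Longrightarrow>
          g \<in> Ev T D E \<Longrightarrow> g' \<in> Ev T E F \<Longrightarrow>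
          tns T (cmp T f' f) (cmp T g' g) = cmp T (tns T f' g') (tns T f g)"
    and swp_natural: "\<And>A B C D f g. f \<in> Ev T A B \<Longrightarrow> g \<in> Ev T C D \<Longrightarrow>
          cmp T (swp T B D) (tns T f g) = cmp T (tns T g f) (swp T A C)"
    and swp_sym: "\<And>A B. cmp T (swp T B A) (swp T A B) = idt T (A @ B)"
    and swp_unit: "\<And>A. swp T A [] = idt T A"
    and swp_hexagon: "\<And>A B C. swp T A (B @ C) =
          cmp T (tns T (idt T B) (swp T A C)) (tns T (swp T A B) (idt T C))"
    and prob_test: "\<And>Ts. Ts \<in> Tests T [] [] \<Longrightarrow>
          (\<forall>p\<in>set Ts. 0 \<le> prob T p) \<and> sum_list (map (prob T) Ts) = 1"
    and prob_cmp: "\<And>p q. p \<in> Ev T [] [] \<Longrightarrow> q \<in> Ev T [] [] \<Longrightarrow>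
          prob T (cmp T p q) = prob T p * prob T q"
    and prob_tns: "\<And>p q. p \<in> Ev T [] [] \<Longrightarrow> q \<in> Ev T [] [] \<Longrightarrow>
          prob T (tns T p q) = prob T p * prob T q"
    and unique_det_effect: "\<And>A. \<exists>!e. [e] \<in> Tests T A []"

definition deteff :: "('s,'e) opt \<Rightarrow> 's list \<Rightarrow> 'e" where
  "deteff T A = (THE e. [e] \<in> Tests T A [])"

text \<open>Pure state: every refinement (sub-collection of a preparation test summing
  to rho) consists of multiples lambda_i rho.\<close>
definition pure :: "('s,'e) opt \<Rightarrow> 's list \<Rightarrow> 'e \<Rightarrow> bool" where
  "pure T A \<rho> \<longleftrightarrow> \<rho> \<in> St T A \<and>
     (\<forall>Ts\<in>Tests T [] A. \<forall>S \<subseteq> {..<length Ts}.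
        (\<forall>a\<in>Eff T A. pair T a \<rho> = (\<Sum>i\<in>S. pair T a (Ts ! i))) \<longrightarrow>
        (\<forall>i\<in>S. \<exists>c\<ge>0. \<forall>a\<in>Eff T A. pair T a (Ts ! i) = c * pair T a \<rho>))"

definition dil :: "('s,'e) opt \<Rightarrow> 's list \<Rightarrow> 'e \<Rightarrow> ('s list \<times> 'e) set" where
  "dil T A \<rho> = {(C, \<Psi>). \<Psi> \<in> St T (A @ C) \<and> cmp T (tns T (idt T A) (deteff T C)) \<Psi> = \<rho>}"

definition purif :: "('s,'e) opt \<Rightarrow> 's list \<Rightarrow> 'e \<Rightarrow> ('s list \<times> 'e) set" where
  "purif T A \<rho> = {(C, \<Psi>) \<in> dil T A \<rho>. pure T (A @ C) \<Psi>}"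

definition fid :: "('s,'e) opt \<Rightarrow> 's list \<Rightarrow> 'e \<Rightarrow> 'e \<Rightarrow> real" where
  "fid T A \<rho> \<sigma> = (INF Ob\<in>Tests T A []. sum_list (map (\<lambda>a. sqrt (pair T a \<rho> * pair T a \<sigma>)) Ob))"

definition corr_fid :: "('s,'e) opt \<Rightarrow> 's list \<Rightarrow> 'e \<Rightarrow> 'e \<Rightarrow> real" where
  "corr_fid T A \<rho> Ch = (INF (B, \<Psi>)\<in>dil T A \<rho>. (fid T (A @ B) \<Psi> (cmp T (tns T Ch (idt T B)) \<Psi>))\<^sup>2)"

definition reversible :: "('s,'e) opt \<Rightarrow> 's list \<Rightarrow> 'e \<Rightarrow> bool" where
  "reversible T B U \<longleftrightarrow> U \<in> Tr1 T B B \<and>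
     (\<exists>V\<in>Tr1 T B B. cmp T V U = idt T B \<and> cmp T U V = idt T B)"

definition all_purifiable :: "('s,'e) opt \<Rightarrow> bool" where
  "all_purifiable T \<longleftrightarrow> (\<forall>A \<rho>. \<rho> \<in> St T A \<longrightarrow> purif T A \<rho> \<noteq> {})"

definition ess_unique_purif :: "('s,'e) opt \<Rightarrow> bool" where
  "ess_unique_purif T \<longleftrightarrow> (\<forall>A \<rho> B \<Phi> \<Psi>. \<rho> \<in> St T A \<longrightarrow>
      (B, \<Phi>) \<in> purif T A \<rho> \<longrightarrow> (B, \<Psi>) \<in> purif T A \<rho> \<longrightarrow>
      (\<exists>U. reversible T B U \<and> \<Psi> = cmp T (tns T (idt T A) U) \<Phi>))"

definition atomic_par :: "('s,'e) opt \<Rightarrow> bool" where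
  "atomic_par T \<longleftrightarrow> (\<forall>A B \<phi> \<psi>. pure T A \<phi> \<longrightarrow> pure T B \<psi> \<longrightarrow> pure T (A @ B) (tns T \<phi> \<psi>))"

end

theory Submission imports Defs begin
context sc_opt begin

lemma test_ev1: "[f] \<in> Tests T A B \<Longrightarrow> f \<in> Ev T A B"
  using tests_ev by fastforce

lemma idt_ev: "idt T A \<in> Ev T A A"
  using test_ev1[OF idt_test] .

lemma deteff_test: "[deteff T A] \<in> Tests T A []"
  unfolding deteff_def by (rule theI', rule unique_det_effect)

lemma deteff_unique: "[e] \<in> Tests T A [] \<Longrightarrow> deteff T A = e"
proof -
  assume a: "[e] \<in> Tests T A []"
  from unique_det_effect[of A] obtain e0 where "\<And>e'. [e'] \<in> Tests T A [] \<Longrightarrow> e' = e0" by blast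
  with a deteff_test[of A] show ?thesis by metis
qed

lemma deteff_ev: "deteff T A \<in> Ev T A []"
  using test_ev1[OF deteff_test] .

lemma cmp_test1: "[f] \<in> Tests T A B \<Longrightarrow> [g] \<in> Tests T B C \<Longrightarrow> [cmp T g f] \<in> Tests T A C"
  using strong_causality[where ?T1.0="[f]" and Ts="\<lambda>_. [g]" and A=A and B=B and C=C] by simp

lemma map_cmp_test: "Ob \<in> Tests T B C \<Longrightarrow> [f] \<in> Tests T A B \<Longrightarrow> map (\<lambda>a. cmp T a f) Ob \<in> Tests T A C"
  using strong_causality[where ?T1.0="[f]" and Ts="\<lambda>_. Ob" and A=A and B=B and C=C] by simp

lemma concat_single: "concat (map (\<lambda>i. [h i]) xs) = map h xs"
  by (induction xs) auto

lemma cmp_map_test: "Ts \<in> Tests T A B \<Longrightarrow> [g] \<in> Tests T B C \<Longrightarrow> map (cmp T g) Ts \<in> Tests T A C"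
proof -
  assume a: "Ts \<in> Tests T A B" "[g] \<in> Tests T B C"
  have e1: "map (\<lambda>i. cmp T g (Ts ! i)) [0..<length Ts] = map (cmp T g) Ts"
    by (rule nth_equalityI) auto
  have e: "concat (map (\<lambda>i. map (\<lambda>g'. cmp T g' (Ts ! i)) [g]) [0..<length Ts]) = map (cmp T g) Ts"
    unfolding e1[symmetric] by (simp only: list.map concat_single)
  have "concat (map (\<lambda>i. map (\<lambda>g'. cmp T g' (Ts ! i)) ((\<lambda>_. [g]) i)) [0..<length Ts]) \<in> Tests T A C"
    by (rule strong_causality[OF a(1)]) (use a(2) in simp)
  then show ?thesis by (simp only: e)
qed

lemma tns_test1: "[f] \<in> Tests T A B \<Longrightarrow> [g] \<in> Tests T C D \<Longrightarrow> [tns T f g] \<in> Tests T (A@C) (B@D)"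
  using par_tests[of "[f]" A B "[g]" C D] by simp

lemma prob_nonneg: "p \<in> Ev T [] [] \<Longrightarrow> 0 \<le> prob T p"
proof -
  assume "p \<in> Ev T [] []"
  then obtain Ts where "Ts \<in> Tests T [] []" "p \<in> set Ts" using ev_tests by blast
  then show ?thesis using prob_test by blast
qed

lemma prob_idt: "prob T (idt T []) = 1"
  using prob_test[OF idt_test[of "[]"]] by simp

lemma deteff_nil: "deteff T [] = idt T []"
  by (rule deteff_unique[OF idt_test])

lemma norm_one: "[p] \<in> Tests T [] [] \<Longrightarrow> p = idt T []"
  using deteff_unique[of p "[]"] deteff_nil by simp

lemma deteff_app: "deteff T (B@C) = cmp T (deteff T B) (tns T (idt T B) (deteff T C))"
proof -
  have "[tns T (idt T B) (deteff T C)] \<in> Tests T (B@C) B"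
    using tns_test1[OF idt_test deteff_test, of B C] by simp
  from cmp_test1[OF this deteff_test] show ?thesis by (rule deteff_unique)
qed

lemma deteff_tns: "deteff T (B@C) = tns T (deteff T B) (deteff T C)"
proof -
  have "[tns T (deteff T B) (deteff T C)] \<in> Tests T (B@C) []"
    using tns_test1[OF deteff_test deteff_test, of B C] by simp
  thus ?thesis by (rule deteff_unique)
qed

lemma pair_cmp: "a \<in> Ev T Y [] \<Longrightarrow> F \<in> Ev T X Y \<Longrightarrow> s \<in> Ev T [] X \<Longrightarrow>
   pair T (cmp T a F) s = pair T a (cmp T F s)"
  unfolding pair_def using cmp_assoc[of s "[]" X F Y a "[]"] by simp

lemma coarse_list:
  "ys \<noteq> [] \<Longrightarrow> ys @ xs \<in> Tests T A B \<Longrightarrow> \<exists>h. h # xs \<in> Tests T A B \<and>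
     (\<forall>E \<rho> b. \<rho> \<in> St T (A @ E) \<longrightarrow> b \<in> Eff T (B @ E) \<longrightarrow>
        circ T E \<rho> b h = sum_list (map (\<lambda>f. circ T E \<rho> b f) ys))"
proof (induction ys arbitrary: xs)
  case Nil then show ?case by simp
next
  case (Cons f ys)
  show ?case
  proof (cases "ys = []")
    case True then show ?thesis using Cons.prems by auto
  next
    case False
    have "ys @ (f # xs) \<in> Tests T A B"
      by (rule tests_perm[OF Cons.prems(2)]) simp
    from Cons.IH[OF False this] obtain h1 where h1: "h1 # f # xs \<in> Tests T A B"
      "\<forall>E \<rho> b. \<rho> \<in> St T (A @ E) \<longrightarrow> b \<in> Eff T (B @ E) \<longrightarrow>
        circ T E \<rho> b h1 = sum_list (map (\<lambda>f. circ T E \<rho> b f) ys)" by blast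
    from coarse_graining[OF h1(1)] obtain h where h: "h # xs \<in> Tests T A B"
      "\<forall>E \<rho> b. \<rho> \<in> St T (A @ E) \<longrightarrow> b \<in> Eff T (B @ E) \<longrightarrow>
               circ T E \<rho> b h = circ T E \<rho> b h1 + circ T E \<rho> b f" by blast
    show ?thesis using h h1(2) by (intro exI[of _ h]) auto
  qed
qed

lemma circ_nil: "h \<in> Ev T X [] \<Longrightarrow> s \<in> Ev T [] X \<Longrightarrow> circ T [] s (idt T []) h = prob T (cmp T h s)"
proof -
  assume a: "h \<in> Ev T X []" "s \<in> Ev T [] X"
  have "cmp T h s \<in> Ev T [] []" using cmp_ev[OF a(2) a(1)] .
  then show ?thesis unfolding circ_def using tns_unit[OF a(1)] cmp_idt by simp
qed

lemma eff_sum: assumes "Ob \<in> Tests T X []" "s \<in> St T X"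
  shows "prob T (cmp T (deteff T X) s) = sum_list (map (\<lambda>a. prob T (cmp T a s)) Ob)"
proof -
  have ne: "Ob \<noteq> []" using tests_ev assms(1) by blast
  have o0: "Ob @ [] \<in> Tests T X []" using assms(1) by simp
  from coarse_list[OF ne o0] obtain h where h: "[h] \<in> Tests T X []"
    "\<forall>E \<rho> b. \<rho> \<in> St T (X @ E) \<longrightarrow> b \<in> Eff T ([] @ E) \<longrightarrow>
        circ T E \<rho> b h = sum_list (map (\<lambda>f. circ T E \<rho> b f) Ob)" by auto
  have hd: "h = deteff T X" using deteff_unique[OF h(1)] by simp
  have s: "s \<in> Ev T [] X" using assms(2) unfolding St_def .
  have "circ T [] s (idt T []) h = sum_list (map (\<lambda>f. circ T [] s (idt T []) f) Ob)"
    using h(2) assms(2) idt_ev[of "[]"] unfolding Eff_def by auto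
  moreover have "circ T [] s (idt T []) h = prob T (cmp T h s)"
    using circ_nil[OF test_ev1[OF h(1)] s] .
  moreover have "map (\<lambda>f. circ T [] s (idt T []) f) Ob = map (\<lambda>a. prob T (cmp T a s)) Ob"
  proof (rule map_cong[OF refl])
    fix a assume "a \<in> set Ob"
    then have "a \<in> Ev T X []" using tests_ev assms(1) by blast
    then show "circ T [] s (idt T []) a = prob T (cmp T a s)" using circ_nil s by blast
  qed
  ultimately show ?thesis using hd by simp
qed

lemma tns_scalar: "p \<in> Ev T [] [] \<Longrightarrow> g \<in> Ev T E [] \<Longrightarrow> tns T p g = cmp T p g"
proof -
  assume a: "p \<in> Ev T [] []" "g \<in> Ev T E []"
  have "tns T (cmp T p (idt T [])) (cmp T (idt T []) g) = cmp T (tns T p (idt T [])) (tns T (idt T []) g)"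
    using interchange[OF idt_ev a(1) a(2) idt_ev] by simp
  then show ?thesis using cmp_idt[OF a(1)] cmp_idt[OF a(2)] tns_unit[OF a(1)] tns_unit[OF a(2)] by simp
qed

lemma zero_event:
  assumes y: "y \<in> Ev T [] X" and z: "prob T (cmp T (deteff T X) y) = 0"
    and tau: "\<tau> \<in> St T E" and b: "b \<in> Eff T (X @ E)"
  shows "prob T (cmp T b (cmp T (tns T y (idt T E)) \<tau>)) = 0"
proof -
  have tauE: "\<tau> \<in> Ev T [] E" using tau unfolding St_def .
  have ty: "tns T y (idt T E) \<in> Ev T E (X @ E)" using tns_ev[OF y idt_ev[of E]] by simp
  define s where "s = cmp T (tns T y (idt T E)) \<tau>"
  have sE: "s \<in> Ev T [] (X @ E)" unfolding s_def using cmp_ev[OF tauE ty] .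
  have bE: "b \<in> Ev T (X @ E) []" using b unfolding Eff_def .
  obtain Ob where Ob: "Ob \<in> Tests T (X @ E) []" "b \<in> set Ob" using ev_tests[OF bE] by blast
  have es: "prob T (cmp T (deteff T (X @ E)) s) = sum_list (map (\<lambda>a. prob T (cmp T a s)) Ob)"
    using eff_sum[OF Ob(1)] sE unfolding St_def by blast
  have p: "cmp T (deteff T X) y \<in> Ev T [] []" using cmp_ev[OF y deteff_ev] .
  have "cmp T (deteff T (X @ E)) s = cmp T (cmp T (tns T (deteff T X) (deteff T E)) (tns T y (idt T E))) \<tau>"
    unfolding s_def deteff_tns
    using cmp_assoc[OF tauE ty tns_ev[OF deteff_ev deteff_ev, of X E]] by simp
  also have "\<dots> = cmp T (tns T (cmp T (deteff T X) y) (cmp T (deteff T E) (idt T E))) \<tau>"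
    using interchange[OF y deteff_ev idt_ev deteff_ev] by simp
  also have "\<dots> = cmp T (tns T (cmp T (deteff T X) y) (deteff T E)) \<tau>"
    using cmp_idt[OF deteff_ev[of E]] by simp
  also have "\<dots> = cmp T (cmp T (cmp T (deteff T X) y) (deteff T E)) \<tau>"
    using tns_scalar[OF p deteff_ev] by simp
  also have "\<dots> = cmp T (cmp T (deteff T X) y) (cmp T (deteff T E) \<tau>)"
    using cmp_assoc[OF tauE deteff_ev p] by simp
  finally have "prob T (cmp T (deteff T (X @ E)) s) = 0"
    using prob_cmp[OF p cmp_ev[OF tauE deteff_ev]] z by simp
  with es have sum0: "sum_list (map (\<lambda>a. prob T (cmp T a s)) Ob) = 0" by simp
  have nn: "\<forall>a\<in>set Ob. 0 \<le> prob T (cmp T a s)"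
  proof
    fix a assume "a \<in> set Ob"
    then have "a \<in> Ev T (X @ E) []" using tests_ev Ob(1) by blast
    then show "0 \<le> prob T (cmp T a s)" using prob_nonneg cmp_ev sE by blast
  qed
  have "\<forall>x\<in>set (map (\<lambda>a. prob T (cmp T a s)) Ob). x = 0"
    using sum_list_nonneg_eq_0_iff[of "map (\<lambda>a. prob T (cmp T a s)) Ob"] nn sum0 by auto
  then have "prob T (cmp T b s) = 0" using Ob(2) by auto
  then show ?thesis unfolding s_def by simp
qed


lemma sum_list_zero: "(\<forall>x\<in>set xs. f x = 0) \<Longrightarrow> sum_list (map f xs) = (0::real)"
  by (induction xs) auto

lemma normalize:
  assumes sig: "\<sigma> \<in> St T X" and n: "cmp T (deteff T X) \<sigma> = idt T []"
  shows "[\<sigma>] \<in> Tests T [] X"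
proof -
  have sE: "\<sigma> \<in> Ev T [] X" using sig unfolding St_def .
  obtain Ts where Ts: "Ts \<in> Tests T [] X" "\<sigma> \<in> set Ts" using ev_tests[OF sE] by blast
  define rest where "rest = remove1 \<sigma> Ts"
  have ms: "mset (\<sigma> # rest) = mset Ts" unfolding rest_def using Ts(2) by simp
  have restsub: "set rest \<subseteq> set Ts" unfolding rest_def by (rule set_remove1_subset)
  have TsE: "set Ts \<subseteq> Ev T [] X" using tests_ev Ts(1) by blast
  show ?thesis
  proof (cases "rest = []")
    case True
    then show ?thesis using tests_perm[OF Ts(1)] ms by simp
  next
    case False
    have t2: "rest @ [\<sigma>] \<in> Tests T [] X" using tests_perm[OF Ts(1)] ms by simp
    from coarse_list[OF False t2] obtain h1 where h1: "h1 # [\<sigma>] \<in> Tests T [] X"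
      "\<forall>E \<rho> b. \<rho> \<in> St T ([] @ E) \<longrightarrow> b \<in> Eff T (X @ E) \<longrightarrow>
        circ T E \<rho> b h1 = sum_list (map (\<lambda>f. circ T E \<rho> b f) rest)" by blast
    have mt: "map (cmp T (deteff T X)) Ts \<in> Tests T [] []"
      using cmp_map_test[OF Ts(1) deteff_test] .
    have s1: "sum_list (map (\<lambda>x. prob T (cmp T (deteff T X) x)) Ts) = 1"
      using prob_test[OF mt] by (simp add: comp_def)
    have "sum_list (map (\<lambda>x. prob T (cmp T (deteff T X) x)) Ts)
        = sum_list (map (\<lambda>x. prob T (cmp T (deteff T X) x)) (\<sigma> # rest))"
      by (simp only: sum_mset_sum_list[symmetric] mset_map ms[symmetric])
    then have s0: "sum_list (map (\<lambda>x. prob T (cmp T (deteff T X) x)) rest) = 0"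
      using s1 n prob_idt by simp
    have nn: "\<And>x. x \<in> set (map (\<lambda>x. prob T (cmp T (deteff T X) x)) rest) \<Longrightarrow> 0 \<le> x"
    proof -
      fix x assume "x \<in> set (map (\<lambda>x. prob T (cmp T (deteff T X) x)) rest)"
      then obtain y where "y \<in> set rest" "x = prob T (cmp T (deteff T X) y)" by auto
      moreover have "y \<in> Ev T [] X" using \<open>y \<in> set rest\<close> restsub TsE by blast
      ultimately show "0 \<le> x" using prob_nonneg[OF cmp_ev[OF _ deteff_ev]] by simp
    qed
    have z: "\<And>y. y \<in> set rest \<Longrightarrow> prob T (cmp T (deteff T X) y) = 0"
    proof -
      have "\<forall>x\<in>set (map (\<lambda>x. prob T (cmp T (deteff T X) x)) rest). x = 0"
        using sum_list_nonneg_eq_0_iff[of "map (\<lambda>x. prob T (cmp T (deteff T X) x)) rest"] nn s0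
        by blast
      then show "\<And>y. y \<in> set rest \<Longrightarrow> prob T (cmp T (deteff T X) y) = 0" by simp
    qed
    have c0: "\<And>E \<tau> b. \<tau> \<in> St T ([] @ E) \<Longrightarrow> b \<in> Eff T (X @ E) \<Longrightarrow> circ T E \<tau> b h1 = 0"
    proof -
      fix E \<tau> b assume a: "\<tau> \<in> St T ([] @ E)" "b \<in> Eff T (X @ E)"
      have "map (\<lambda>f. circ T E \<tau> b f) rest = map (\<lambda>f. 0) rest"
      proof (rule map_cong[OF refl])
        fix y assume y: "y \<in> set rest"
        have "y \<in> Ev T [] X" using y restsub TsE by blast
        then show "circ T E \<tau> b y = 0" unfolding circ_def
          using zero_event[OF _ z[OF y]] a by simp
      qed
      then have "\<forall>y\<in>set rest. circ T E \<tau> b y = 0" by (simp add: map_eq_conv)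
      then show "circ T E \<tau> b h1 = 0" using h1(2) a sum_list_zero[of rest "circ T E \<tau> b"] by simp
    qed
    from coarse_graining[of h1 \<sigma> "[]" "[]" X] h1(1) obtain h where h: "[h] \<in> Tests T [] X"
      "\<forall>E \<rho> b. \<rho> \<in> St T ([] @ E) \<longrightarrow> b \<in> Eff T (X @ E) \<longrightarrow>
               circ T E \<rho> b h = circ T E \<rho> b h1 + circ T E \<rho> b \<sigma>" by blast
    have "h = \<sigma>"
      by (rule extensionality[OF test_ev1[OF h(1)] sE]) (use h(2) c0 in simp)
    then show ?thesis using h(1) by simp
  qed
qed


lemma pair_nonneg: "a \<in> Ev T X [] \<Longrightarrow> s \<in> Ev T [] X \<Longrightarrow> 0 \<le> pair T a s"
  unfolding pair_def using prob_nonneg[OF cmp_ev] by blast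

lemma fsum_nonneg:
  assumes "Ob \<in> Tests T X []" "\<rho> \<in> St T X" "\<sigma> \<in> St T X"
  shows "0 \<le> sum_list (map (\<lambda>a. sqrt (pair T a \<rho> * pair T a \<sigma>)) Ob)"
proof (rule sum_list_nonneg)
  fix x assume "x \<in> set (map (\<lambda>a. sqrt (pair T a \<rho> * pair T a \<sigma>)) Ob)"
  then obtain a where a: "a \<in> set Ob" "x = sqrt (pair T a \<rho> * pair T a \<sigma>)" by auto
  have "a \<in> Ev T X []" using a(1) tests_ev assms(1) by blast
  then have "0 \<le> pair T a \<rho>" "0 \<le> pair T a \<sigma>" using pair_nonneg assms(2,3) unfolding St_def by auto
  then show "0 \<le> x" using a(2) by simp
qed

lemma fid_le:
  assumes "Ob \<in> Tests T X []" "\<rho> \<in> St T X" "\<sigma> \<in> St T X"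
  shows "fid T X \<rho> \<sigma> \<le> sum_list (map (\<lambda>a. sqrt (pair T a \<rho> * pair T a \<sigma>)) Ob)"
  unfolding fid_def
  by (rule cINF_lower[OF bdd_belowI2 assms(1)]) (rule fsum_nonneg[OF _ assms(2,3)])

lemma fid_ge:
  assumes "\<And>Ob. Ob \<in> Tests T X [] \<Longrightarrow> c \<le> sum_list (map (\<lambda>a. sqrt (pair T a \<rho> * pair T a \<sigma>)) Ob)"
  shows "c \<le> fid T X \<rho> \<sigma>"
  unfolding fid_def
  by (rule cINF_greatest) (use deteff_test assms in auto)

lemma fid_nonneg: "\<rho> \<in> St T X \<Longrightarrow> \<sigma> \<in> St T X \<Longrightarrow> 0 \<le> fid T X \<rho> \<sigma>"
  by (rule fid_ge) (rule fsum_nonneg)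

lemma dp:
  assumes Psi: "\<Psi> \<in> St T (A @ B)" and M: "[M] \<in> Tests T B B'" and Ch: "Ch \<in> Ev T A A"
  shows "fid T (A @ B) \<Psi> (cmp T (tns T Ch (idt T B)) \<Psi>)
       \<le> fid T (A @ B') (cmp T (tns T (idt T A) M) \<Psi>) (cmp T (tns T Ch (idt T B')) (cmp T (tns T (idt T A) M) \<Psi>))"
proof (rule fid_ge)
  define N where "N = tns T (idt T A) M"
  have NT: "[N] \<in> Tests T (A @ B) (A @ B')" unfolding N_def using tns_test1[OF idt_test M] .
  have NE: "N \<in> Ev T (A @ B) (A @ B')" using test_ev1[OF NT] .
  have ME: "M \<in> Ev T B B'" using test_ev1[OF M] .
  have PE: "\<Psi> \<in> Ev T [] (A @ B)" using Psi unfolding St_def .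
  define X where "X = tns T Ch (idt T B)"
  define X' where "X' = tns T Ch (idt T B')"
  have XE: "X \<in> Ev T (A @ B) (A @ B)" unfolding X_def using tns_ev[OF Ch idt_ev] .
  have X'E: "X' \<in> Ev T (A @ B') (A @ B')" unfolding X'_def using tns_ev[OF Ch idt_ev] .
  have comm: "cmp T N X = cmp T X' N"
  proof -
    have "tns T (cmp T (idt T A) Ch) (cmp T M (idt T B)) = cmp T N X"
      unfolding N_def X_def using interchange[OF Ch idt_ev idt_ev ME] .
    moreover have "tns T (cmp T Ch (idt T A)) (cmp T (idt T B') M) = cmp T X' N"
      unfolding N_def X'_def using interchange[OF idt_ev Ch ME idt_ev] .
    ultimately show ?thesis using cmp_idt[OF Ch] cmp_idt[OF ME] by simp
  qed
  fix Ob assume Ob: "Ob \<in> Tests T (A @ B') []"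
  have Ob': "map (\<lambda>a. cmp T a N) Ob \<in> Tests T (A @ B) []" using map_cmp_test[OF Ob NT] .
  have XP: "cmp T X \<Psi> \<in> St T (A @ B)" unfolding St_def using cmp_ev[OF PE XE] .
  have "fid T (A @ B) \<Psi> (cmp T X \<Psi>) \<le>
     sum_list (map (\<lambda>a. sqrt (pair T a \<Psi> * pair T a (cmp T X \<Psi>))) (map (\<lambda>a. cmp T a N) Ob))"
    using fid_le[OF Ob' Psi XP] .
  also have "\<dots> = sum_list (map (\<lambda>a. sqrt (pair T a (cmp T N \<Psi>) * pair T a (cmp T X' (cmp T N \<Psi>)))) Ob)"
  proof -
    have "map (\<lambda>a. sqrt (pair T a \<Psi> * pair T a (cmp T X \<Psi>))) (map (\<lambda>a. cmp T a N) Ob)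
        = map (\<lambda>a. sqrt (pair T a (cmp T N \<Psi>) * pair T a (cmp T X' (cmp T N \<Psi>)))) Ob"
    proof (simp only: map_map comp_def, rule map_cong[OF refl])
      fix a assume "a \<in> set Ob"
      then have aE: "a \<in> Ev T (A @ B') []" using tests_ev Ob by blast
      have 1: "pair T (cmp T a N) \<Psi> = pair T a (cmp T N \<Psi>)" using pair_cmp[OF aE NE PE] .
      have "pair T (cmp T a N) (cmp T X \<Psi>) = pair T a (cmp T N (cmp T X \<Psi>))"
        using pair_cmp[OF aE NE cmp_ev[OF PE XE]] .
      also have "cmp T N (cmp T X \<Psi>) = cmp T (cmp T N X) \<Psi>" using cmp_assoc[OF PE XE NE] .
      also have "\<dots> = cmp T (cmp T X' N) \<Psi>" using comm by simp
      also have "\<dots> = cmp T X' (cmp T N \<Psi>)" using cmp_assoc[OF PE NE X'E] by simp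
      finally show "sqrt (pair T (cmp T a N) \<Psi> * pair T (cmp T a N) (cmp T X \<Psi>))
          = sqrt (pair T a (cmp T N \<Psi>) * pair T a (cmp T X' (cmp T N \<Psi>)))" using 1 by simp
    qed
    then show ?thesis by (rule arg_cong[where f=sum_list])
  qed
  finally show "fid T (A @ B) \<Psi> (cmp T (tns T Ch (idt T B)) \<Psi>) \<le>
     sum_list (map (\<lambda>a. sqrt (pair T a (cmp T (tns T (idt T A) M) \<Psi>) *
        pair T a (cmp T (tns T Ch (idt T B')) (cmp T (tns T (idt T A) M) \<Psi>)))) Ob)"
    unfolding X_def X'_def N_def .
qed

lemma dp_sq:
  assumes Psi: "\<Psi> \<in> St T (A @ B)" and M: "[M] \<in> Tests T B B'" and Ch: "Ch \<in> Ev T A A"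
  shows "(fid T (A @ B) \<Psi> (cmp T (tns T Ch (idt T B)) \<Psi>))\<^sup>2
       \<le> (fid T (A @ B') (cmp T (tns T (idt T A) M) \<Psi>) (cmp T (tns T Ch (idt T B')) (cmp T (tns T (idt T A) M) \<Psi>)))\<^sup>2"
proof -
  have PE: "\<Psi> \<in> Ev T [] (A @ B)" using Psi unfolding St_def .
  have "cmp T (tns T Ch (idt T B)) \<Psi> \<in> St T (A @ B)"
    unfolding St_def using cmp_ev[OF PE tns_ev[OF Ch idt_ev]] by simp
  then have "0 \<le> fid T (A @ B) \<Psi> (cmp T (tns T Ch (idt T B)) \<Psi>)" using fid_nonneg Psi by blast
  then show ?thesis using power_mono[OF dp[OF assms]] by blast
qed


lemma idt_cmp_idt: "cmp T (idt T A) (idt T A) = idt T A"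
  using cmp_idt[OF idt_ev] by blast

lemma tns_idt_assoc: "f \<in> Ev T X Y \<Longrightarrow> tns T (idt T A) (tns T (idt T B) f) = tns T (idt T (A @ B)) f"
  using tns_assoc[OF idt_ev idt_ev, of f X Y A B] tns_idt by simp

lemma dil_purif:
  assumes d: "(B, \<Psi>) \<in> dil T A \<rho>" and p: "(C, \<Phi>) \<in> purif T (A @ B) \<Psi>" and Ch: "Ch \<in> Ev T A A"
  shows "(B @ C, \<Phi>) \<in> purif T A \<rho>"
    and "(fid T (A @ B @ C) \<Phi> (cmp T (tns T Ch (idt T (B @ C))) \<Phi>))\<^sup>2
         \<le> (fid T (A @ B) \<Psi> (cmp T (tns T Ch (idt T B)) \<Psi>))\<^sup>2"
proof -
  have PsiS: "\<Psi> \<in> St T (A @ B)" and m1: "cmp T (tns T (idt T A) (deteff T B)) \<Psi> = \<rho>"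
    using d unfolding dil_def by auto
  have PhiS: "\<Phi> \<in> St T (A @ B @ C)" and m2: "cmp T (tns T (idt T (A @ B)) (deteff T C)) \<Phi> = \<Psi>"
    and pu: "pure T (A @ B @ C) \<Phi>"
    using p unfolding purif_def dil_def by auto
  define M where "M = tns T (idt T B) (deteff T C)"
  have MT: "[M] \<in> Tests T (B @ C) B" unfolding M_def using tns_test1[OF idt_test deteff_test, of B C] by simp
  have ME: "M \<in> Ev T (B @ C) B" using test_ev1[OF MT] .
  have key: "tns T (idt T A) M = tns T (idt T (A @ B)) (deteff T C)"
    unfolding M_def using tns_idt_assoc[OF deteff_ev] .
  have PhiE: "\<Phi> \<in> Ev T [] (A @ B @ C)" using PhiS unfolding St_def .
  have QE: "tns T (idt T A) M \<in> Ev T (A @ B @ C) (A @ B)" using tns_ev[OF idt_ev ME] .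
  have "cmp T (tns T (idt T A) (deteff T (B @ C))) \<Phi>
      = cmp T (tns T (idt T A) (cmp T (deteff T B) M)) \<Phi>" unfolding M_def deteff_app ..
  also have "\<dots> = cmp T (cmp T (tns T (idt T A) (deteff T B)) (tns T (idt T A) M)) \<Phi>"
    using interchange[OF idt_ev idt_ev ME deteff_ev, of A] idt_cmp_idt by simp
  also have "\<dots> = cmp T (tns T (idt T A) (deteff T B)) (cmp T (tns T (idt T A) M) \<Phi>)"
    using cmp_assoc[OF PhiE QE tns_ev[OF idt_ev deteff_ev]] by simp
  also have "\<dots> = \<rho>" using key m2 m1 by simp
  finally show "(B @ C, \<Phi>) \<in> purif T A \<rho>"
    unfolding purif_def dil_def using PhiS pu by simp
  have "(fid T (A @ B @ C) \<Phi> (cmp T (tns T Ch (idt T (B @ C))) \<Phi>))\<^sup>2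
     \<le> (fid T (A @ B) (cmp T (tns T (idt T A) M) \<Phi>) (cmp T (tns T Ch (idt T B)) (cmp T (tns T (idt T A) M) \<Phi>)))\<^sup>2"
    using dp_sq[OF _ MT Ch, of \<Phi>] PhiS by simp
  then show "(fid T (A @ B @ C) \<Phi> (cmp T (tns T Ch (idt T (B @ C))) \<Phi>))\<^sup>2
         \<le> (fid T (A @ B) \<Psi> (cmp T (tns T Ch (idt T B)) \<Psi>))\<^sup>2"
    using key m2 by simp
qed


lemma swp_ev: "swp T A B \<in> Ev T (A @ B) (B @ A)"
  using test_ev1[OF swp_test] .

lemma margnorm:
  assumes d: "(B, \<Phi>) \<in> dil T A \<rho>" and r: "\<rho> \<in> St1 T A"
  shows "cmp T (deteff T (A @ B)) \<Phi> = idt T []"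
proof -
  have PhiE: "\<Phi> \<in> Ev T [] (A @ B)" and m: "cmp T (tns T (idt T A) (deteff T B)) \<Phi> = \<rho>"
    using d unfolding dil_def St_def by auto
  have rT: "[\<rho>] \<in> Tests T [] A" using r unfolding St1_def by simp
  have "cmp T (deteff T (A @ B)) \<Phi> = cmp T (deteff T A) (cmp T (tns T (idt T A) (deteff T B)) \<Phi>)"
  proof -
    have QE: "tns T (idt T A) (deteff T B) \<in> Ev T (A @ B) A" using tns_ev[OF idt_ev deteff_ev, of A B] by simp
    show ?thesis unfolding deteff_app using cmp_assoc[OF PhiE QE deteff_ev] by simp
  qed
  also have "\<dots> = cmp T (deteff T A) \<rho>" using m by simp
  also have "\<dots> = idt T []" using norm_one[OF cmp_test1[OF rT deteff_test]] .
  finally show ?thesis .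
qed

lemma trace_tns:
  assumes X: "X \<in> Ev T [] P" and Y: "Y \<in> Ev T [] Q" and n: "cmp T (deteff T Q) Y = idt T []"
  shows "cmp T (tns T (idt T P) (deteff T Q)) (tns T X Y) = X"
proof -
  have "tns T (cmp T (idt T P) X) (cmp T (deteff T Q) Y) = cmp T (tns T (idt T P) (deteff T Q)) (tns T X Y)"
    using interchange[OF X idt_ev Y deteff_ev] .
  then show ?thesis using cmp_idt[OF X] n tns_unit[OF X] by simp
qed

lemma append_tns:
  assumes X: "X \<in> Ev T [] P" and Y: "Y \<in> Ev T [] Q"
  shows "cmp T (tns T (idt T P) Y) X = tns T X Y"
proof -
  have "tns T (cmp T (idt T P) X) (cmp T Y (idt T [])) = cmp T (tns T (idt T P) Y) (tns T X (idt T []))"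
    using interchange[OF X idt_ev idt_ev Y] .
  then show ?thesis using cmp_idt[OF X] cmp_idt[OF Y] tns_unit[OF X] by simp
qed

lemma marg_tns:
  assumes Phi: "\<Phi> \<in> Ev T [] (A @ B)" and m: "cmp T (tns T (idt T A) (deteff T B)) \<Phi> = \<rho>"
    and Xi: "\<Xi> \<in> Ev T [] Q" and n: "cmp T (deteff T Q) \<Xi> = idt T []"
  shows "cmp T (tns T (idt T A) (deteff T (B @ Q))) (tns T \<Phi> \<Xi>) = \<rho>"
proof -
  define Y0 where "Y0 = tns T (idt T A) (deteff T B)"
  have Y0E: "Y0 \<in> Ev T (A @ B) A" unfolding Y0_def using tns_ev[OF idt_ev deteff_ev] by simp
  have rE: "\<rho> \<in> Ev T [] A" using cmp_ev[OF Phi Y0E] m unfolding Y0_def by simp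
  have e: "tns T (idt T A) (deteff T (B @ Q)) = tns T Y0 (deteff T Q)"
    unfolding Y0_def deteff_tns using tns_assoc[OF idt_ev deteff_ev deteff_ev, of A B Q] by simp
  have "tns T (cmp T Y0 \<Phi>) (cmp T (deteff T Q) \<Xi>) = cmp T (tns T Y0 (deteff T Q)) (tns T \<Phi> \<Xi>)"
    using interchange[OF Phi Y0E Xi deteff_ev] .
  then show ?thesis using e m n tns_unit[OF rE] unfolding Y0_def by simp
qed

lemma inv_apply:
  assumes M: "[M] \<in> Tests T X Y" and N: "[N] \<in> Tests T Y X" and i: "cmp T N M = idt T X"
    and Phi: "\<Phi> \<in> Ev T [] (A @ X)"
  shows "cmp T (tns T (idt T A) N) (cmp T (tns T (idt T A) M) \<Phi>) = \<Phi>"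
proof -
  have ME: "M \<in> Ev T X Y" and NE: "N \<in> Ev T Y X" using test_ev1 M N by auto
  have "cmp T (tns T (idt T A) N) (cmp T (tns T (idt T A) M) \<Phi>)
      = cmp T (cmp T (tns T (idt T A) N) (tns T (idt T A) M)) \<Phi>"
    using cmp_assoc[OF Phi tns_ev[OF idt_ev ME] tns_ev[OF idt_ev NE]] by simp
  also have "cmp T (tns T (idt T A) N) (tns T (idt T A) M) = idt T (A @ X)"
    using interchange[OF idt_ev idt_ev ME NE, of A] idt_cmp_idt i tns_idt by simp
  finally show ?thesis using cmp_idt[OF Phi] by simp
qed

lemma rev_eq:
  assumes M: "[M] \<in> Tests T X Y" and N: "[N] \<in> Tests T Y X" and i: "cmp T N M = idt T X"
    and Phi: "\<Phi> \<in> St T (A @ X)" and Ch: "Ch \<in> Ev T A A"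
  shows "(fid T (A @ X) \<Phi> (cmp T (tns T Ch (idt T X)) \<Phi>))\<^sup>2
       = (fid T (A @ Y) (cmp T (tns T (idt T A) M) \<Phi>) (cmp T (tns T Ch (idt T Y)) (cmp T (tns T (idt T A) M) \<Phi>)))\<^sup>2"
proof -
  have PhiE: "\<Phi> \<in> Ev T [] (A @ X)" using Phi unfolding St_def .
  have ME: "M \<in> Ev T X Y" using test_ev1 M by auto
  have MP: "cmp T (tns T (idt T A) M) \<Phi> \<in> St T (A @ Y)"
    unfolding St_def using cmp_ev[OF PhiE tns_ev[OF idt_ev ME]] by simp
  show ?thesis
    using dp_sq[OF Phi M Ch] dp_sq[OF MP N Ch] inv_apply[OF M N i PhiE] by simp
qed

lemma pure_transfer:
  assumes pu: "pure T (A @ X) \<Phi>" and M: "[M] \<in> Tests T X Y" and N: "[N] \<in> Tests T Y X"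
    and i1: "cmp T N M = idt T X" and i2: "cmp T M N = idt T Y"
  shows "pure T (A @ Y) (cmp T (tns T (idt T A) M) \<Phi>)"
proof -
  define Mh where "Mh = tns T (idt T A) M"
  define Nh where "Nh = tns T (idt T A) N"
  have MhT: "[Mh] \<in> Tests T (A @ X) (A @ Y)" unfolding Mh_def using tns_test1[OF idt_test M] .
  have NhT: "[Nh] \<in> Tests T (A @ Y) (A @ X)" unfolding Nh_def using tns_test1[OF idt_test N] .
  have MhE: "Mh \<in> Ev T (A @ X) (A @ Y)" using test_ev1[OF MhT] .
  have NhE: "Nh \<in> Ev T (A @ Y) (A @ X)" using test_ev1[OF NhT] .
  have PhiE: "\<Phi> \<in> Ev T [] (A @ X)" using pu unfolding pure_def St_def by simp
  have back1: "\<And>t. t \<in> Ev T [] (A @ X) \<Longrightarrow> cmp T Nh (cmp T Mh t) = t"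
    unfolding Nh_def Mh_def using inv_apply[OF M N i1] by blast
  have back2: "\<And>t. t \<in> Ev T [] (A @ Y) \<Longrightarrow> cmp T Mh (cmp T Nh t) = t"
    unfolding Nh_def Mh_def using inv_apply[OF N M i2] by blast
  have puPhi: "\<forall>Ts\<in>Tests T [] (A @ X). \<forall>S \<subseteq> {..<length Ts}.
        (\<forall>a\<in>Eff T (A @ X). pair T a \<Phi> = (\<Sum>i\<in>S. pair T a (Ts ! i))) \<longrightarrow>
        (\<forall>i\<in>S. \<exists>c\<ge>0. \<forall>a\<in>Eff T (A @ X). pair T a (Ts ! i) = c * pair T a \<Phi>)"
    using pu unfolding pure_def by blast
  have MP: "cmp T Mh \<Phi> \<in> Ev T [] (A @ Y)" using cmp_ev[OF PhiE MhE] .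
  show ?thesis unfolding pure_def Mh_def[symmetric]
  proof (intro conjI ballI allI impI)
    show "cmp T Mh \<Phi> \<in> St T (A @ Y)" unfolding St_def using MP .
  next
    fix Ts S i
    assume Ts: "Ts \<in> Tests T [] (A @ Y)" and S: "S \<subseteq> {..<length Ts}"
      and H: "\<forall>a\<in>Eff T (A @ Y). pair T a (cmp T Mh \<Phi>) = (\<Sum>i\<in>S. pair T a (Ts ! i))"
      and iS: "i \<in> S"
    define Ts' where "Ts' = map (cmp T Nh) Ts"
    have Ts'T: "Ts' \<in> Tests T [] (A @ X)" unfolding Ts'_def using cmp_map_test[OF Ts NhT] .
    have TsE: "\<And>j. j < length Ts \<Longrightarrow> Ts ! j \<in> Ev T [] (A @ Y)"
      using tests_ev Ts nth_mem by blast
    have H': "\<forall>a\<in>Eff T (A @ X). pair T a \<Phi> = (\<Sum>j\<in>S. pair T a (Ts' ! j))"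
    proof
      fix a assume "a \<in> Eff T (A @ X)"
      then have aE: "a \<in> Ev T (A @ X) []" unfolding Eff_def .
      have anE: "cmp T a Nh \<in> Eff T (A @ Y)" unfolding Eff_def using cmp_ev[OF NhE aE] .
      have "pair T a \<Phi> = pair T a (cmp T Nh (cmp T Mh \<Phi>))" using back1[OF PhiE] by simp
      also have "\<dots> = pair T (cmp T a Nh) (cmp T Mh \<Phi>)" using pair_cmp[OF aE NhE MP] by simp
      also have "\<dots> = (\<Sum>j\<in>S. pair T (cmp T a Nh) (Ts ! j))" using H anE by blast
      also have "\<dots> = (\<Sum>j\<in>S. pair T a (Ts' ! j))"
      proof (rule sum.cong[OF refl])
        fix j assume "j \<in> S"
        then have j: "j < length Ts" using S by auto
        show "pair T (cmp T a Nh) (Ts ! j) = pair T a (Ts' ! j)"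
          unfolding Ts'_def using pair_cmp[OF aE NhE TsE[OF j]] j by simp
      qed
      finally show "pair T a \<Phi> = (\<Sum>j\<in>S. pair T a (Ts' ! j))" .
    qed
    have S': "S \<subseteq> {..<length Ts'}" using S unfolding Ts'_def by simp
    from puPhi Ts'T S' H' iS obtain c where c: "c \<ge> 0"
      "\<forall>a\<in>Eff T (A @ X). pair T a (Ts' ! i) = c * pair T a \<Phi>" by blast
    have i: "i < length Ts" using iS S by auto
    show "\<exists>c\<ge>0. \<forall>a\<in>Eff T (A @ Y). pair T a (Ts ! i) = c * pair T a (cmp T Mh \<Phi>)"
    proof (intro exI[of _ c] conjI ballI)
      show "c \<ge> 0" by fact
      fix a assume "a \<in> Eff T (A @ Y)"
      then have aE: "a \<in> Ev T (A @ Y) []" unfolding Eff_def .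
      have amE: "cmp T a Mh \<in> Eff T (A @ X)" unfolding Eff_def using cmp_ev[OF MhE aE] .
      have "pair T a (Ts ! i) = pair T a (cmp T Mh (cmp T Nh (Ts ! i)))" using back2[OF TsE[OF i]] by simp
      also have "\<dots> = pair T (cmp T a Mh) (Ts' ! i)"
        unfolding Ts'_def using pair_cmp[OF aE MhE cmp_ev[OF TsE[OF i] NhE]] i by simp
      also have "\<dots> = c * pair T (cmp T a Mh) \<Phi>" using c(2) amE by blast
      also have "\<dots> = c * pair T a (cmp T Mh \<Phi>)" using pair_cmp[OF aE MhE PhiE] by simp
      finally show "pair T a (Ts ! i) = c * pair T a (cmp T Mh \<Phi>)" .
    qed
  qed
qed


lemma part2:
  assumes r: "\<rho> \<in> St1 T A" and Ch: "Ch \<in> Ev T A A"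
    and eu: "ess_unique_purif T" and at: "atomic_par T"
    and p1: "(B, \<Phi>) \<in> purif T A \<rho>" and p2: "(D, \<Xi>) \<in> purif T A \<rho>"
  shows "(fid T (A @ B) \<Phi> (cmp T (tns T Ch (idt T B)) \<Phi>))\<^sup>2
       \<le> (fid T (A @ D) \<Xi> (cmp T (tns T Ch (idt T D)) \<Xi>))\<^sup>2"
proof -
  have d1: "(B, \<Phi>) \<in> dil T A \<rho>" and d2: "(D, \<Xi>) \<in> dil T A \<rho>"
    using p1 p2 unfolding purif_def by auto
  have PhiS: "\<Phi> \<in> St T (A @ B)" and mPhi: "cmp T (tns T (idt T A) (deteff T B)) \<Phi> = \<rho>"
    and puPhi: "pure T (A @ B) \<Phi>" using p1 unfolding purif_def dil_def by auto
  have XiS: "\<Xi> \<in> St T (A @ D)" and mXi: "cmp T (tns T (idt T A) (deteff T D)) \<Xi> = \<rho>"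
    and puXi: "pure T (A @ D) \<Xi>" using p2 unfolding purif_def dil_def by auto
  have PhiE: "\<Phi> \<in> Ev T [] (A @ B)" using PhiS unfolding St_def .
  have XiE: "\<Xi> \<in> Ev T [] (A @ D)" using XiS unfolding St_def .
  have nPhi: "cmp T (deteff T (A @ B)) \<Phi> = idt T []" using margnorm[OF d1 r] .
  have nXi: "cmp T (deteff T (A @ D)) \<Xi> = idt T []" using margnorm[OF d2 r] .
  have XiT: "[\<Xi>] \<in> Tests T [] (A @ D)" using normalize[OF XiS nXi] .
  have rS: "\<rho> \<in> St T A" using r test_ev1 unfolding St1_def St_def by blast
  define K where "K = B @ A @ D"
  define P1 where "P1 = tns T \<Phi> \<Xi>"
  define P2 where "P2 = tns T \<Xi> \<Phi>"
  have P1E: "P1 \<in> Ev T [] (A @ K)" unfolding P1_def K_def using tns_ev[OF PhiE XiE] by simp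
  have P2E: "P2 \<in> Ev T [] (A @ D @ A @ B)" unfolding P2_def using tns_ev[OF XiE PhiE] by simp
  have puP1: "pure T (A @ K) P1" unfolding P1_def K_def using at puPhi puXi unfolding atomic_par_def
    by (metis append.assoc)
  have puP2: "pure T (A @ D @ A @ B) P2" unfolding P2_def using at puPhi puXi unfolding atomic_par_def
    by (metis append.assoc)
  have mP1: "cmp T (tns T (idt T A) (deteff T K)) P1 = \<rho>"
    unfolding K_def P1_def using marg_tns[OF PhiE mPhi XiE nXi] .
  have mP2: "cmp T (tns T (idt T A) (deteff T (D @ A @ B))) P2 = \<rho>"
    unfolding P2_def using marg_tns[OF XiE mXi PhiE nPhi] by simp
  define S1 where "S1 = swp T D (A @ B)"
  define Q1 where "Q1 = tns T (swp T A B) (idt T D)"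
  define S2 where "S2 = swp T (A @ B) D"
  define Q2 where "Q2 = tns T (swp T B A) (idt T D)"
  define Pi where "Pi = cmp T Q1 S1"
  define Pi' where "Pi' = cmp T S2 Q2"
  have S1T: "[S1] \<in> Tests T (D @ A @ B) (A @ B @ D)" unfolding S1_def using swp_test[of D "A @ B"] by simp
  have S2T: "[S2] \<in> Tests T (A @ B @ D) (D @ A @ B)" unfolding S2_def using swp_test[of "A @ B" D] by simp
  have Q1T: "[Q1] \<in> Tests T (A @ B @ D) (B @ A @ D)" unfolding Q1_def
    using tns_test1[OF swp_test idt_test, of A B D] by simp
  have Q2T: "[Q2] \<in> Tests T (B @ A @ D) (A @ B @ D)" unfolding Q2_def
    using tns_test1[OF swp_test idt_test, of B A D] by simp
  have S1E: "S1 \<in> Ev T (D @ A @ B) (A @ B @ D)" using test_ev1[OF S1T] .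
  have S2E: "S2 \<in> Ev T (A @ B @ D) (D @ A @ B)" using test_ev1[OF S2T] .
  have Q1E: "Q1 \<in> Ev T (A @ B @ D) (B @ A @ D)" using test_ev1[OF Q1T] .
  have Q2E: "Q2 \<in> Ev T (B @ A @ D) (A @ B @ D)" using test_ev1[OF Q2T] .
  have PiT: "[Pi] \<in> Tests T (D @ A @ B) K" unfolding Pi_def K_def using cmp_test1[OF S1T Q1T] .
  have Pi'T: "[Pi'] \<in> Tests T K (D @ A @ B)" unfolding Pi'_def K_def using cmp_test1[OF Q2T S2T] .
  have QQ1: "cmp T Q2 Q1 = idt T (A @ B @ D)"
  proof -
    have "cmp T Q2 Q1 = tns T (cmp T (swp T B A) (swp T A B)) (cmp T (idt T D) (idt T D))"
      unfolding Q1_def Q2_def using interchange[OF swp_ev swp_ev idt_ev idt_ev, of B A D] by simp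
    then show ?thesis using swp_sym idt_cmp_idt tns_idt by simp
  qed
  have QQ2: "cmp T Q1 Q2 = idt T (B @ A @ D)"
  proof -
    have "cmp T Q1 Q2 = tns T (cmp T (swp T A B) (swp T B A)) (cmp T (idt T D) (idt T D))"
      unfolding Q1_def Q2_def using interchange[OF swp_ev swp_ev idt_ev idt_ev, of A B D] by simp
    then show ?thesis using swp_sym idt_cmp_idt tns_idt by simp
  qed
  have SS1: "cmp T S2 S1 = idt T (D @ A @ B)" unfolding S1_def S2_def using swp_sym by simp
  have SS2: "cmp T S1 S2 = idt T (A @ B @ D)" unfolding S1_def S2_def using swp_sym by simp
  have inv1: "cmp T Pi' Pi = idt T (D @ A @ B)"
  proof -
    have "cmp T Pi' Pi = cmp T S2 (cmp T Q2 (cmp T Q1 S1))"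
      unfolding Pi_def Pi'_def using cmp_assoc[OF cmp_ev[OF S1E Q1E] Q2E S2E] by simp
    also have "cmp T Q2 (cmp T Q1 S1) = cmp T (cmp T Q2 Q1) S1" using cmp_assoc[OF S1E Q1E Q2E] .
    also have "\<dots> = S1" using QQ1 cmp_idt[OF S1E] by simp
    finally show ?thesis using SS1 by simp
  qed
  have inv2: "cmp T Pi Pi' = idt T K"
  proof -
    have "cmp T Pi Pi' = cmp T Q1 (cmp T S1 (cmp T S2 Q2))"
      unfolding Pi_def Pi'_def using cmp_assoc[OF cmp_ev[OF Q2E S2E] S1E Q1E] by simp
    also have "cmp T S1 (cmp T S2 Q2) = cmp T (cmp T S1 S2) Q2" using cmp_assoc[OF Q2E S2E S1E] .
    also have "\<dots> = Q2" using SS2 cmp_idt[OF Q2E] by simp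
    finally show ?thesis using QQ2 unfolding K_def by simp
  qed
  define P2' where "P2' = cmp T (tns T (idt T A) Pi) P2"
  have PiE: "Pi \<in> Ev T (D @ A @ B) K" using test_ev1[OF PiT] .
  have P2'E: "P2' \<in> Ev T [] (A @ K)" unfolding P2'_def using cmp_ev[OF P2E tns_ev[OF idt_ev PiE]] by simp
  have puP2': "pure T (A @ K) P2'" unfolding P2'_def using pure_transfer[OF puP2 PiT Pi'T inv1 inv2] .
  have mP2': "cmp T (tns T (idt T A) (deteff T K)) P2' = \<rho>"
  proof -
    have eK: "cmp T (deteff T K) Pi = deteff T (D @ A @ B)"
      using deteff_unique[OF cmp_test1[OF PiT deteff_test]] by simp
    have "cmp T (tns T (idt T A) (deteff T K)) P2'
        = cmp T (cmp T (tns T (idt T A) (deteff T K)) (tns T (idt T A) Pi)) P2"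
      unfolding P2'_def using cmp_assoc[OF P2E tns_ev[OF idt_ev PiE] tns_ev[OF idt_ev deteff_ev]] by simp
    also have "cmp T (tns T (idt T A) (deteff T K)) (tns T (idt T A) Pi)
        = tns T (idt T A) (cmp T (deteff T K) Pi)"
      using interchange[OF idt_ev idt_ev PiE deteff_ev, of A] idt_cmp_idt by simp
    finally show ?thesis using eK mP2 by simp
  qed
  have P1p: "(K, P1) \<in> purif T A \<rho>" unfolding purif_def dil_def St_def using P1E mP1 puP1 by simp
  have P2'p: "(K, P2') \<in> purif T A \<rho>" unfolding purif_def dil_def St_def using P2'E mP2' puP2' by simp
  from eu rS P2'p P1p obtain U where U: "reversible T K U" "P1 = cmp T (tns T (idt T A) U) P2'"
    unfolding ess_unique_purif_def by blast
  from U(1) obtain V where UT: "[U] \<in> Tests T K K" and VT: "[V] \<in> Tests T K K"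
    and VU: "cmp T V U = idt T K" unfolding reversible_def Tr1_def by blast
  define M1 where "M1 = tns T (idt T B) \<Xi>"
  have M1T: "[M1] \<in> Tests T B K" unfolding M1_def K_def using tns_test1[OF idt_test XiT, of B] by simp
  have M1P: "cmp T (tns T (idt T A) M1) \<Phi> = P1"
    unfolding M1_def P1_def using tns_idt_assoc[OF XiE, of A B] append_tns[OF PhiE XiE] by simp
  have step1: "(fid T (A @ B) \<Phi> (cmp T (tns T Ch (idt T B)) \<Phi>))\<^sup>2
      \<le> (fid T (A @ K) P1 (cmp T (tns T Ch (idt T K)) P1))\<^sup>2"
    using dp_sq[OF PhiS M1T Ch] M1P by simp
  have P2'S: "P2' \<in> St T (A @ K)" using P2'E unfolding St_def .
  have step2: "(fid T (A @ K) P2' (cmp T (tns T Ch (idt T K)) P2'))\<^sup>2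
      = (fid T (A @ K) P1 (cmp T (tns T Ch (idt T K)) P1))\<^sup>2"
    using rev_eq[OF UT VT VU P2'S Ch] U(2) by simp
  have P2S: "P2 \<in> St T (A @ D @ A @ B)" using P2E unfolding St_def .
  have step3: "(fid T (A @ D @ A @ B) P2 (cmp T (tns T Ch (idt T (D @ A @ B))) P2))\<^sup>2
      = (fid T (A @ K) P2' (cmp T (tns T Ch (idt T K)) P2'))\<^sup>2"
    using rev_eq[OF PiT Pi'T inv1 _ Ch, of P2] P2S unfolding P2'_def by simp
  define M2 where "M2 = tns T (idt T D) (deteff T (A @ B))"
  have M2T: "[M2] \<in> Tests T (D @ A @ B) D" unfolding M2_def
    using tns_test1[OF idt_test deteff_test, of D "A @ B"] by simp
  have M2P: "cmp T (tns T (idt T A) M2) P2 = \<Xi>"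
    unfolding M2_def P2_def using tns_idt_assoc[OF deteff_ev, of A D "A @ B"] trace_tns[OF XiE PhiE nPhi]
    by simp
  have step4: "(fid T (A @ D @ A @ B) P2 (cmp T (tns T Ch (idt T (D @ A @ B))) P2))\<^sup>2
      \<le> (fid T (A @ D) \<Xi> (cmp T (tns T Ch (idt T D)) \<Xi>))\<^sup>2"
    using dp_sq[OF _ M2T Ch, of P2] P2S M2P by simp
  show ?thesis using step1 step2 step3 step4 by linarith
qed

end

theorem mainTheorem12:
  fixes T :: "('s, 'e) opt" and A :: "'s list" and \<rho> Ch :: 'e
  assumes "sc_opt T" and "\<rho> \<in> St1 T A" and "Ch \<in> Tr1 T A A"
  shows "(all_purifiable T \<longrightarrow>
            corr_fid T A \<rho> Ch =
              (INF (B, \<Phi>)\<in>purif T A \<rho>. (fid T (A @ B) \<Phi> (cmp T (tns T Ch (idt T B)) \<Phi>))\<^sup>2))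
       \<and> (all_purifiable T \<and> ess_unique_purif T \<and> atomic_par T \<longrightarrow>
            (\<forall>(B, \<Phi>)\<in>purif T A \<rho>.
               corr_fid T A \<rho> Ch = (fid T (A @ B) \<Phi> (cmp T (tns T Ch (idt T B)) \<Phi>))\<^sup>2))"
proof -
  interpret sc_opt T by fact
  define G where "G = (\<lambda>(B, \<Phi>). (fid T (A @ B) \<Phi> (cmp T (tns T Ch (idt T B)) \<Phi>))\<^sup>2)"
  have ChE: "Ch \<in> Ev T A A" using assms(3) test_ev1 unfolding Tr1_def by blast
  have rS: "\<rho> \<in> St T A" using assms(2) test_ev1 unfolding St1_def St_def by blast
  have cf: "corr_fid T A \<rho> Ch = (INF x\<in>dil T A \<rho>. G x)" unfolding corr_fid_def G_def ..
  have bd: "\<And>X. bdd_below (G ` X)" by (rule bdd_belowI2[where m=0]) (auto simp: G_def)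
  have sub: "purif T A \<rho> \<subseteq> dil T A \<rho>" unfolding purif_def by auto
  have key: "\<And>B \<Psi>. all_purifiable T \<Longrightarrow> (B, \<Psi>) \<in> dil T A \<rho> \<Longrightarrow>
      \<exists>x\<in>purif T A \<rho>. G x \<le> G (B, \<Psi>)"
  proof -
    fix B \<Psi> assume ap: "all_purifiable T" and d: "(B, \<Psi>) \<in> dil T A \<rho>"
    have "\<Psi> \<in> St T (A @ B)" using d unfolding dil_def by auto
    then obtain C \<Phi> where p: "(C, \<Phi>) \<in> purif T (A @ B) \<Psi>"
      using ap unfolding all_purifiable_def by fast
    show "\<exists>x\<in>purif T A \<rho>. G x \<le> G (B, \<Psi>)"
      using dil_purif[OF d p ChE] unfolding G_def by (intro bexI[of _ "(B @ C, \<Phi>)"]) auto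
  qed
  have part1: "all_purifiable T \<Longrightarrow> corr_fid T A \<rho> Ch = (INF x\<in>purif T A \<rho>. G x)"
  proof -
    assume ap: "all_purifiable T"
    have ne: "purif T A \<rho> \<noteq> {}" using ap rS unfolding all_purifiable_def by blast
    then have ne2: "dil T A \<rho> \<noteq> {}" using sub by blast
    have "(INF x\<in>dil T A \<rho>. G x) \<le> (INF x\<in>purif T A \<rho>. G x)"
      by (rule cINF_greatest[OF ne]) (rule cINF_lower[OF bd], use sub in blast)
    moreover have "(INF x\<in>purif T A \<rho>. G x) \<le> (INF x\<in>dil T A \<rho>. G x)"
    proof (rule cINF_greatest[OF ne2])
      fix x assume x: "x \<in> dil T A \<rho>"
      obtain B \<Psi> where xe: "x = (B, \<Psi>)" by fastforce
      from key[OF ap x[unfolded xe]] obtain y where y: "y \<in> purif T A \<rho>" "G y \<le> G (B, \<Psi>)" by blast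
      have "(INF x\<in>purif T A \<rho>. G x) \<le> G y" using cINF_lower[OF bd y(1)] .
      then show "(INF x\<in>purif T A \<rho>. G x) \<le> G x" using y(2) xe by simp
    qed
    ultimately show ?thesis using cf by simp
  qed
  have part2': "all_purifiable T \<and> ess_unique_purif T \<and> atomic_par T \<Longrightarrow>
      \<forall>x\<in>purif T A \<rho>. corr_fid T A \<rho> Ch = G x"
  proof (intro ballI)
    fix x assume h: "all_purifiable T \<and> ess_unique_purif T \<and> atomic_par T" and x: "x \<in> purif T A \<rho>"
    obtain B \<Phi> where xe: "x = (B, \<Phi>)" by fastforce
    have ne2: "dil T A \<rho> \<noteq> {}" using x sub by blast
    have "(INF x\<in>dil T A \<rho>. G x) \<le> G x" using cINF_lower[OF bd] x sub by blast
    moreover have "G x \<le> (INF x\<in>dil T A \<rho>. G x)"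
    proof (rule cINF_greatest[OF ne2])
      fix z assume z: "z \<in> dil T A \<rho>"
      obtain B' \<Psi> where ze: "z = (B', \<Psi>)" by fastforce
      from key[OF _ z[unfolded ze]] h obtain y where y: "y \<in> purif T A \<rho>" "G y \<le> G (B', \<Psi>)" by blast
      obtain D \<Xi> where ye: "y = (D, \<Xi>)" by fastforce
      have "G x \<le> G y" unfolding xe ye G_def
        using part2[OF assms(2) ChE _ _ x[unfolded xe] y(1)[unfolded ye]] h by simp
      then show "G x \<le> G z" using y(2) ze by simp
    qed
    ultimately show "corr_fid T A \<rho> Ch = G x" using cf by simp
  qed
  show ?thesis using part1 part2' unfolding G_def by auto
qed

end
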